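(* Let $n\ge1$, let $\mathfrak{n}=\mathfrak{n}(n)$ and let $\operatorname{Der}(\mathfrak{n})$ be its Lie algebra of derivations, with $\operatorname{Der}(\mathfrak{n})_0$ and $\operatorname{Der}(\mathfrak{n})_1$ as in the context. Then: (a) $\operatorname{Der}(\mathfrak{n})_0$ is a Lie subalgebra of $\operatorname{Der}(\mathfrak{n})$ isomorphic to $\mathfrak{gl}(E)$; (b) $\operatorname{Der}(\mathfrak{n})_1$ is a solvable ideal of $\operatorname{Der}(\mathfrak{n})$; (c) $\operatorname{Der}(\mathfrak{n})=\operatorname{Der}(\mathfrak{n})_0\oplus\operatorname{Der}(\mathfrak{n})_1$.
   Context: Fix a field of characteristic zero and a positive integer $n$. The Lie algebra $\mathfrak{n}(n)$ has basis $e_1,\dots,e_n,a,b,x$; $u,y$; $e_i\wedge e_j$ ($1\le i<j\le n$); $c$; $x_1,\dots,x_n$; $u_1,\dots,u_n$; $y_1,\dots,y_n$; $f,h$. Its bracket is defined on basis elements by: $[e_i,e_j]=e_i\wedge e_j$ for $i<j$ (so $[e_j,e_i]=-e_i\wedge e_j$), $[e_i,x]=x_i$, $[e_i,u]=u_i$, $[e_i,y]=y_i$, $[a,b]=c$, $[a,y]=f$, $[a,c]=h$, $[b,u]=h$, $[b,y]=h$, $[x,u]=f$, $[x,y]=h$, extended by antisymmetry, and all other brackets of pairs of basis elements are zero. Let $E=\operatorname{span}\{e_1,\dots,e_n\}$ and let $W$ be the span of all the other basis vectors (so $\mathfrak{n}=E\oplus W$). $\operatorname{Der}(\mathfrak{n})_0$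 is the set of derivations $D$ of $\mathfrak{n}$ with $D(E)\subset E$ and $D(a)=D(b)=D(x)=D(u)=D(y)=0$. $\operatorname{Der}(\mathfrak{n})_1$ is the set of derivations $D$ of $\mathfrak{n}$ with $D(E)\subset W$. *)

theory Defs
  imports Main
begin

text \<open>Basis symbols. Ee i = e_i, EW i j = e_i wedge e_j, Xi i = x_i, Ui i = u_i, Yi i = y_i.
  Only indices 1..n (and i<j for EW) are valid for a given n.\<close>
datatype basis = Ee nat | A | Bb | X | U | Y | EW nat nat | C | Xi nat | Ui nat | Yi nat | F | H

definition idx :: "nat \<Rightarrow> nat set" where "idx n = {1..n}"

definition Bset :: "nat \<Rightarrow> basis set" where
  "Bset n = Ee ` idx n \<union> {A, Bb, X, U, Y, C, F, H}
     \<union> {EW i j | i j. i \<in> idx n \<and> j \<in> idx n \<and> i < j}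
     \<union> Xi ` idx n \<union> Ui ` idx n \<union> Yi ` idx n"

definition Eset :: "nat \<Rightarrow> basis set" where "Eset n = Ee ` idx n"

text \<open>Vectors are coefficient functions on basis symbols, supported on Bset n.\<close>
definition bv :: "basis \<Rightarrow> basis \<Rightarrow> 'k::field" where
  "bv b = (\<lambda>c. if c = b then 1 else 0)"

definition vzero :: "basis \<Rightarrow> 'k::field" where "vzero = (\<lambda>c. 0)"
definition vadd :: "(basis \<Rightarrow> 'k::field) \<Rightarrow> (basis \<Rightarrow> 'k) \<Rightarrow> basis \<Rightarrow> 'k" where
  "vadd v w = (\<lambda>c. v c + w c)"
definition vsmul :: "'k::field \<Rightarrow> (basis \<Rightarrow> 'k) \<Rightarrow> basis \<Rightarrow> 'k" where
  "vsmul a v = (\<lambda>c. a * v c)"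

definition supp_in :: "basis set \<Rightarrow> (basis \<Rightarrow> 'k::field) set" where
  "supp_in S = {v. \<forall>c. c \<notin> S \<longrightarrow> v c = 0}"

definition Vn :: "nat \<Rightarrow> (basis \<Rightarrow> 'k::field) set" where "Vn n = supp_in (Bset n)"
definition En :: "nat \<Rightarrow> (basis \<Rightarrow> 'k::field) set" where "En n = supp_in (Eset n)"
definition Wn :: "nat \<Rightarrow> (basis \<Rightarrow> 'k::field) set" where "Wn n = supp_in (Bset n - Eset n)"

fun br0 :: "basis \<Rightarrow> basis \<Rightarrow> basis \<Rightarrow> 'k::field" where
  "br0 (Ee i) (Ee j) = (if i < j then bv (EW i j) else vzero)"
| "br0 (Ee i) X = bv (Xi i)"
| "br0 (Ee i) U = bv (Ui i)"
| "br0 (Ee i) Y = bv (Yi i)"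
| "br0 A Bb = bv C"
| "br0 A Y = bv F"
| "br0 A C = bv H"
| "br0 Bb U = bv H"
| "br0 Bb Y = bv H"
| "br0 X U = bv F"
| "br0 X Y = bv H"
| "br0 _ _ = vzero"

definition br :: "basis \<Rightarrow> basis \<Rightarrow> basis \<Rightarrow> 'k::field" where
  "br p q = (\<lambda>c. br0 p q c - br0 q p c)"

definition bracket :: "nat \<Rightarrow> (basis \<Rightarrow> 'k::field) \<Rightarrow> (basis \<Rightarrow> 'k) \<Rightarrow> basis \<Rightarrow> 'k" where
  "bracket n v w = (\<lambda>c. \<Sum>p\<in>Bset n. \<Sum>q\<in>Bset n. v p * w q * br p q c)"

definition endo :: "(basis \<Rightarrow> 'k::field) set \<Rightarrow> ((basis \<Rightarrow> 'k) \<Rightarrow> (basis \<Rightarrow> 'k)) set" where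
  "endo S = {T. (\<forall>v\<in>S. T v \<in> S)
     \<and> (\<forall>v\<in>S. \<forall>w\<in>S. T (vadd v w) = vadd (T v) (T w))
     \<and> (\<forall>a. \<forall>v\<in>S. T (vsmul a v) = vsmul a (T v))
     \<and> (\<forall>v. v \<notin> S \<longrightarrow> T v = vzero)}"

definition mzero :: "(basis \<Rightarrow> 'k::field) \<Rightarrow> basis \<Rightarrow> 'k" where "mzero = (\<lambda>v. vzero)"
definition madd :: "((basis \<Rightarrow> 'k::field) \<Rightarrow> basis \<Rightarrow> 'k) \<Rightarrow> ((basis \<Rightarrow> 'k) \<Rightarrow> basis \<Rightarrow> 'k) \<Rightarrow> (basis \<Rightarrow> 'k) \<Rightarrow> basis \<Rightarrow> 'k" where
  "madd S T = (\<lambda>v. vadd (S v) (T v))"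
definition msmul :: "'k::field \<Rightarrow> ((basis \<Rightarrow> 'k) \<Rightarrow> basis \<Rightarrow> 'k) \<Rightarrow> (basis \<Rightarrow> 'k) \<Rightarrow> basis \<Rightarrow> 'k" where
  "msmul a T = (\<lambda>v. vsmul a (T v))"
definition comm :: "((basis \<Rightarrow> 'k::field) \<Rightarrow> basis \<Rightarrow> 'k) \<Rightarrow> ((basis \<Rightarrow> 'k) \<Rightarrow> basis \<Rightarrow> 'k) \<Rightarrow> (basis \<Rightarrow> 'k) \<Rightarrow> basis \<Rightarrow> 'k" where
  "comm S T = (\<lambda>v c. S (T v) c - T (S v) c)"

definition Der :: "nat \<Rightarrow> ((basis \<Rightarrow> 'k::field) \<Rightarrow> basis \<Rightarrow> 'k) set" where
  "Der n = {D \<in> endo (Vn n). \<forall>v\<in>Vn n. \<forall>w\<in>Vn n.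
      D (bracket n v w) = vadd (bracket n (D v) w) (bracket n v (D w))}"

definition Der0 :: "nat \<Rightarrow> ((basis \<Rightarrow> 'k::field) \<Rightarrow> basis \<Rightarrow> 'k) set" where
  "Der0 n = {D \<in> Der n. (\<forall>v\<in>En n. D v \<in> En n)
      \<and> D (bv A) = vzero \<and> D (bv Bb) = vzero \<and> D (bv X) = vzero
      \<and> D (bv U) = vzero \<and> D (bv Y) = vzero}"

definition Der1 :: "nat \<Rightarrow> ((basis \<Rightarrow> 'k::field) \<Rightarrow> basis \<Rightarrow> 'k) set" where
  "Der1 n = {D \<in> Der n. \<forall>v\<in>En n. D v \<in> Wn n}"

definition glE :: "nat \<Rightarrow> ((basis \<Rightarrow> 'k::field) \<Rightarrow> basis \<Rightarrow> 'k) set" where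
  "glE n = endo (En n)"

definition subspace_of :: "((basis \<Rightarrow> 'k::field) \<Rightarrow> basis \<Rightarrow> 'k) set \<Rightarrow> bool" where
  "subspace_of L = (mzero \<in> L \<and> (\<forall>S\<in>L. \<forall>T\<in>L. madd S T \<in> L) \<and> (\<forall>a. \<forall>T\<in>L. msmul a T \<in> L))"

definition lie_subalgebra :: "((basis \<Rightarrow> 'k::field) \<Rightarrow> basis \<Rightarrow> 'k) set \<Rightarrow> ((basis \<Rightarrow> 'k) \<Rightarrow> basis \<Rightarrow> 'k) set \<Rightarrow> bool" where
  "lie_subalgebra L G = (L \<subseteq> G \<and> subspace_of L \<and> (\<forall>S\<in>L. \<forall>T\<in>L. comm S T \<in> L))"

definition lie_ideal :: "((basis \<Rightarrow> 'k::field) \<Rightarrow> basis \<Rightarrow> 'k) set \<Rightarrow> ((basis \<Rightarrow> 'k) \<Rightarrow> basis \<Rightarrow> 'k) set \<Rightarrow> bool" where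
  "lie_ideal I G = (I \<subseteq> G \<and> subspace_of I \<and> (\<forall>S\<in>G. \<forall>T\<in>I. comm S T \<in> I))"

inductive_set comm_span :: "((basis \<Rightarrow> 'k::field) \<Rightarrow> basis \<Rightarrow> 'k) set \<Rightarrow> ((basis \<Rightarrow> 'k) \<Rightarrow> basis \<Rightarrow> 'k) set"
  for L where
  cs_zero: "mzero \<in> comm_span L"
| cs_comm: "S \<in> L \<Longrightarrow> T \<in> L \<Longrightarrow> comm S T \<in> comm_span L"
| cs_add: "S \<in> comm_span L \<Longrightarrow> T \<in> comm_span L \<Longrightarrow> madd S T \<in> comm_span L"
| cs_smul: "T \<in> comm_span L \<Longrightarrow> msmul a T \<in> comm_span L"

fun derived_series :: "((basis \<Rightarrow> 'k::field) \<Rightarrow> basis \<Rightarrow> 'k) set \<Rightarrow> nat \<Rightarrow> ((basis \<Rightarrow> 'k) \<Rightarrow> basis \<Rightarrow> 'k) set" where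
  "derived_series L 0 = L"
| "derived_series L (Suc k) = comm_span (derived_series L k)"

definition solvable :: "((basis \<Rightarrow> 'k::field) \<Rightarrow> basis \<Rightarrow> 'k) set \<Rightarrow> bool" where
  "solvable L = (\<exists>k. derived_series L k = {mzero})"

definition lie_iso :: "(((basis \<Rightarrow> 'k::field) \<Rightarrow> basis \<Rightarrow> 'k) \<Rightarrow> ((basis \<Rightarrow> 'k) \<Rightarrow> basis \<Rightarrow> 'k))
   \<Rightarrow> ((basis \<Rightarrow> 'k) \<Rightarrow> basis \<Rightarrow> 'k) set \<Rightarrow> ((basis \<Rightarrow> 'k) \<Rightarrow> basis \<Rightarrow> 'k) set \<Rightarrow> bool" where
  "lie_iso \<phi> L M = (bij_betw \<phi> L M
     \<and> (\<forall>S\<in>L. \<forall>T\<in>L. \<phi> (madd S T) = madd (\<phi> S) (\<phi> T))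
     \<and> (\<forall>a. \<forall>T\<in>L. \<phi> (msmul a T) = msmul a (\<phi> T))
     \<and> (\<forall>S\<in>L. \<forall>T\<in>L. \<phi> (comm S T) = comm (\<phi> S) (\<phi> T)))"

end

theory Submission
  imports Defs
begin


fun P0 :: "basis \<Rightarrow> (basis \<times> basis) set" where
  "P0 (EW i j) = (if i < j then {(Ee i, Ee j)} else {})"
| "P0 C = {(A,Bb)}" | "P0 (Xi i) = {(Ee i, X)}" | "P0 (Ui i) = {(Ee i,U)}" | "P0 (Yi i) = {(Ee i, Y)}"
| "P0 F = {(A,Y),(X,U)}" | "P0 H = {(A,C),(Bb,U),(Bb,Y),(X,Y)}" | "P0 _ = {}"

lemma br0_P0: "(br0 p q c :: 'k::field) = (if (p,q) \<in> P0 c then 1 else 0)"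
  by (cases p; cases q; simp add: bv_def vzero_def; cases c; auto)

lemma finite_idx[simp]: "finite (idx n)" by (simp add: idx_def)

lemma finite_Bset[simp]: "finite (Bset n)"
proof -
  have "{EW i j | i j. i \<in> idx n \<and> j \<in> idx n \<and> i < j} \<subseteq> (\<lambda>(i,j). EW i j) ` (idx n \<times> idx n)" by auto
  then have "finite {EW i j | i j. i \<in> idx n \<and> j \<in> idx n \<and> i < j}"
    by (rule finite_subset) simp
  then show ?thesis by (simp add: Bset_def)
qed

lemma finite_Eset[simp]: "finite (Eset n)" by (simp add: Eset_def)

lemma Bset_mem[simp]:
  "Ee i \<in> Bset n \<longleftrightarrow> i \<in> idx n"
  "A \<in> Bset n" "Bb \<in> Bset n" "X \<in> Bset n" "U \<in> Bset n" "Y \<in> Bset n" "C \<in> Bset n" "F \<in> Bset n" "H \<in> Bset n"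
  "EW i j \<in> Bset n \<longleftrightarrow> i \<in> idx n \<and> j \<in> idx n \<and> i < j"
  "Xi i \<in> Bset n \<longleftrightarrow> i \<in> idx n"
  "Ui i \<in> Bset n \<longleftrightarrow> i \<in> idx n"
  "Yi i \<in> Bset n \<longleftrightarrow> i \<in> idx n"
  by (auto simp: Bset_def)

lemma Eset_mem[simp]:
  "Ee i \<in> Eset n \<longleftrightarrow> i \<in> idx n"
  "A \<notin> Eset n" "Bb \<notin> Eset n" "X \<notin> Eset n" "U \<notin> Eset n" "Y \<notin> Eset n" "C \<notin> Eset n" "F \<notin> Eset n" "H \<notin> Eset n"
  "EW i j \<notin> Eset n" "Xi i \<notin> Eset n" "Ui i \<notin> Eset n" "Yi i \<notin> Eset n"
  by (auto simp: Eset_def)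

lemma Eset_sub: "Eset n \<subseteq> Bset n" by (auto simp: Eset_def Bset_def)

lemma supp_inI: "(\<And>c. c \<notin> S \<Longrightarrow> v c = 0) \<Longrightarrow> v \<in> supp_in S" by (simp add: supp_in_def)
lemma supp_inD: "v \<in> supp_in S \<Longrightarrow> c \<notin> S \<Longrightarrow> v c = 0" by (simp add: supp_in_def)

lemma vzero_in[simp]: "vzero \<in> supp_in S" by (simp add: supp_in_def vzero_def)
lemma vadd_in[simp]: "v \<in> supp_in S \<Longrightarrow> w \<in> supp_in S \<Longrightarrow> vadd v w \<in> supp_in S"
  by (simp add: supp_in_def vadd_def)
lemma vsmul_in[simp]: "v \<in> supp_in S \<Longrightarrow> vsmul a v \<in> supp_in S"
  by (simp add: supp_in_def vsmul_def)
lemma supp_in_mono: "S \<subseteq> T \<Longrightarrow> v \<in> supp_in S \<Longrightarrow> v \<in> supp_in T"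
  by (auto simp: supp_in_def)
lemma bv_in[simp]: "bv p \<in> supp_in S \<longleftrightarrow> p \<in> S"
  by (auto simp: supp_in_def bv_def)

lemma En_Vn: "v \<in> En n \<Longrightarrow> v \<in> Vn n"
  unfolding En_def Vn_def using Eset_sub supp_in_mono by blast
lemma Wn_Vn: "v \<in> Wn n \<Longrightarrow> v \<in> Vn n"
  unfolding Wn_def Vn_def by (rule supp_in_mono[rotated]) auto

lemma bv_apply: "bv p q = (if q = p then 1 else 0)" by (simp add: bv_def)
lemma bv_same[simp]: "bv p p = 1" by (simp add: bv_def)
lemma bv_diff[simp]: "q \<noteq> p \<Longrightarrow> bv p q = 0" by (simp add: bv_def)
lemma vzero_apply: "vzero c = 0" by (simp add: vzero_def)
lemma vadd_apply: "vadd v w c = v c + w c" by (simp add: vadd_def)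
lemma vsmul_apply: "vsmul a v c = a * v c" by (simp add: vsmul_def)
lemmas vapp = vzero_apply vadd_apply vsmul_apply

lemma bracket_P0:
  "bracket n v w c = (\<Sum>x\<in>P0 c \<inter> (Bset n \<times> Bset n). v (fst x) * w (snd x) - v (snd x) * w (fst x))"
proof -
  let ?S = "Bset n \<times> Bset n" and ?P = "P0 c"
  have fin: "finite ?S" by simp
  have "bracket n v w c = (\<Sum>x\<in>?S. v (fst x) * w (snd x) * br (fst x) (snd x) c)"
    by (simp add: bracket_def sum.cartesian_product case_prod_beta)
  also have "\<dots> = (\<Sum>x\<in>?S. (if x \<in> ?P then v (fst x) * w (snd x) else 0))
              - (\<Sum>x\<in>?S. (if prod.swap x \<in> ?P then v (fst x) * w (snd x) else 0))"
    unfolding sum_subtractf[symmetric] by (rule sum.cong) (auto simp: br_def br0_P0 algebra_simps)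
  also have "(\<Sum>x\<in>?S. (if x \<in> ?P then v (fst x) * w (snd x) else 0)) = (\<Sum>x\<in>?S \<inter> ?P. v (fst x) * w (snd x))"
    using fin by (simp add: sum.inter_restrict)
  also have "(\<Sum>x\<in>?S. (if prod.swap x \<in> ?P then v (fst x) * w (snd x) else 0))
        = (\<Sum>x\<in>?S \<inter> {x. prod.swap x \<in> ?P}. v (fst x) * w (snd x))"
    using fin by (simp add: sum.inter_restrict)
  also have "?S \<inter> {x. prod.swap x \<in> ?P} = prod.swap ` (?S \<inter> ?P)" by force
  also have "(\<Sum>x\<in>prod.swap ` (?S \<inter> ?P). v (fst x) * w (snd x)) = (\<Sum>x\<in>?S \<inter> ?P. v (snd x) * w (fst x))"
    by (subst sum.reindex) (auto simp: inj_on_def)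
  finally show ?thesis by (simp add: sum_subtractf Int_commute)
qed

lemma bracket_zero_coords[simp]:
  "bracket n v w (Ee i) = 0" "bracket n v w A = 0" "bracket n v w Bb = 0" "bracket n v w X = 0"
  "bracket n v w U = 0" "bracket n v w Y = 0"
  by (simp_all add: bracket_P0)

lemma bracket_C[simp]: "bracket n v w C = v A * w Bb - v Bb * w A"
  by (simp add: bracket_P0)
lemma bracket_Xi[simp]: "bracket n v w (Xi i) = (if i \<in> idx n then v (Ee i) * w X - v X * w (Ee i) else 0)"
  by (simp add: bracket_P0)
lemma bracket_Ui[simp]: "bracket n v w (Ui i) = (if i \<in> idx n then v (Ee i) * w U - v U * w (Ee i) else 0)"
  by (simp add: bracket_P0)
lemma bracket_Yi[simp]: "bracket n v w (Yi i) = (if i \<in> idx n then v (Ee i) * w Y - v Y * w (Ee i) else 0)"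
  by (simp add: bracket_P0)
lemma bracket_EW[simp]: "bracket n v w (EW i j) = (if i \<in> idx n \<and> j \<in> idx n \<and> i < j then v (Ee i) * w (Ee j) - v (Ee j) * w (Ee i) else 0)"
proof (cases "i \<in> idx n \<and> j \<in> idx n \<and> i < j")
  case True
  then have "P0 (EW i j) \<inter> (Bset n \<times> Bset n) = {(Ee i, Ee j)}" by auto
  then show ?thesis using True by (simp add: bracket_P0)
next
  case False
  then have h: "P0 (EW i j) \<inter> (Bset n \<times> Bset n) = {}" by auto
  show ?thesis unfolding bracket_P0 h using False by (simp only: sum.empty if_False)
qed
lemma bracket_F[simp]: "bracket n v w F = (v A * w Y - v Y * w A) + (v X * w U - v U * w X)"
  by (simp add: bracket_P0)
lemma bracket_H[simp]: "bracket n v w H = (v A * w C - v C * w A) + (v Bb * w U - v U * w Bb)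
    + (v Bb * w Y - v Y * w Bb) + (v X * w Y - v Y * w X)"
  by (simp add: bracket_P0 algebra_simps)



lemma endoD:
  assumes "T \<in> endo S"
  shows "v \<in> S \<Longrightarrow> T v \<in> S" "v \<in> S \<Longrightarrow> w \<in> S \<Longrightarrow> T (vadd v w) = vadd (T v) (T w)"
        "v \<in> S \<Longrightarrow> T (vsmul a v) = vsmul a (T v)" "v \<notin> S \<Longrightarrow> T v = vzero"
  using assms by (auto simp: endo_def)

lemma endo_vzero: assumes T: "T \<in> endo (supp_in BS)" shows "T vzero = vzero"
proof -
  have "T vzero = T (vsmul 0 vzero)" by (simp add: vsmul_def vzero_def)
  also have "\<dots> = vsmul 0 (T vzero)" using endoD(3)[OF T] by simp
  also have "\<dots> = vzero" by (simp add: vsmul_def vzero_def)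
  finally show ?thesis .
qed

lemma endo_in: assumes T: "T \<in> endo (supp_in BS)" shows "T v \<in> supp_in BS"
  using endoD(1,4)[OF T, of v] by (cases "v \<in> supp_in BS") auto

lemma sum_bv_delta: "finite BS \<Longrightarrow> (\<Sum>p\<in>BS. v p * bv p c) = (if c \<in> BS then v c else 0)"
proof -
  assume "finite BS"
  have "(\<Sum>p\<in>BS. v p * bv p c) = (\<Sum>p\<in>BS. if c = p then v c else 0)" by (rule sum.cong) (auto simp: bv_apply)
  then show ?thesis using \<open>finite BS\<close> by simp
qed

lemma sum_bv_delta2: "finite BS \<Longrightarrow> (\<Sum>p\<in>BS. bv c p * v p) = (if c \<in> BS then v c else 0)"
proof -
  assume "finite BS"
  have "(\<Sum>p\<in>BS. bv c p * v p) = (\<Sum>p\<in>BS. if c = p then v c else 0)" by (rule sum.cong) (auto simp: bv_apply)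
  then show ?thesis using \<open>finite BS\<close> by simp
qed

lemma endo_expand:
  assumes T: "T \<in> endo (supp_in BS)" and fin: "finite BS" and v: "v \<in> supp_in BS"
  shows "T v = (\<lambda>c. \<Sum>p\<in>BS. v p * T (bv p) c)"
proof -
  have gen: "finite G \<Longrightarrow> G \<subseteq> BS \<Longrightarrow> T (\<lambda>c. \<Sum>p\<in>G. v p * bv p c) = (\<lambda>c. \<Sum>p\<in>G. v p * T (bv p) c)" for G
  proof (induction G rule: finite_induct)
    case empty
    then show ?case using endo_vzero[OF T] by (simp add: vzero_def[symmetric])
  next
    case (insert x G)
    have sv: "(\<lambda>c. \<Sum>p\<in>insert x G. v p * bv p c) = vadd (vsmul (v x) (bv x)) (\<lambda>c. \<Sum>p\<in>G. v p * bv p c)"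
      using insert by (simp add: vadd_def vsmul_def fun_eq_iff)
    have inG: "(\<lambda>c. \<Sum>p\<in>G. v p * bv p c) \<in> supp_in BS"
      using insert by (intro supp_inI) (auto intro!: sum.neutral simp: bv_apply)
    have inx: "vsmul (v x) (bv x) \<in> supp_in BS" using insert by simp
    have "T (\<lambda>c. \<Sum>p\<in>insert x G. v p * bv p c) = vadd (vsmul (v x) (T (bv x))) (\<lambda>c. \<Sum>p\<in>G. v p * T (bv p) c)"
      unfolding sv endoD(2)[OF T inx inG] using insert endoD(3)[OF T] by simp
    then show ?case using insert by (simp add: fun_eq_iff vapp)
  qed
  have "(\<lambda>c. \<Sum>p\<in>BS. v p * bv p c) = v"
    using v fin by (auto simp: fun_eq_iff sum_bv_delta supp_in_def)
  with gen[OF fin subset_refl] show ?thesis by simp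
qed

lemma comp_expand:
  assumes "S \<in> endo (supp_in BS)" "T \<in> endo (supp_in BS)" "finite BS"
  shows "S (T v) q = (\<Sum>r\<in>BS. T v r * S (bv r) q)"
  using endo_expand[OF assms(1,3) endo_in[OF assms(2)]] by simp

lemma bracket_in[simp]: "bracket n v w \<in> Vn n"
  unfolding Vn_def
proof (rule supp_inI)
  fix c assume "c \<notin> Bset n" then show "bracket n v w c = 0" by (cases c) auto
qed

lemma bracket_vadd1: "bracket n (vadd v1 v2) w = vadd (bracket n v1 w) (bracket n v2 w)"
  by (simp add: vapp bracket_def fun_eq_iff distrib_right sum.distrib)
lemma bracket_vadd2: "bracket n v (vadd w1 w2) = vadd (bracket n v w1) (bracket n v w2)"
  by (simp add: vapp bracket_def fun_eq_iff distrib_right distrib_left sum.distrib)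
lemma bracket_vsmul1: "bracket n (vsmul a v) w = vsmul a (bracket n v w)"
  by (simp add: vapp bracket_def fun_eq_iff sum_distrib_left mult.assoc)
lemma bracket_vsmul2: "bracket n v (vsmul a w) = vsmul a (bracket n v w)"
  by (simp add: vapp bracket_def fun_eq_iff sum_distrib_left algebra_simps)
lemma bracket_vzero1[simp]: "bracket n vzero w = vzero"
  by (simp add: vapp bracket_def fun_eq_iff vzero_def)
lemma bracket_vzero2[simp]: "bracket n v vzero = vzero"
  by (simp add: vapp bracket_def fun_eq_iff vzero_def)
lemma bracket_diff1: "bracket n (\<lambda>c. f c - g c) w = (\<lambda>c. bracket n f w c - bracket n g w c)"
  by (simp add: vapp bracket_def fun_eq_iff left_diff_distrib sum_subtractf)
lemma bracket_diff2: "bracket n v (\<lambda>c. f c - g c) = (\<lambda>c. bracket n v f c - bracket n v g c)"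
  by (simp add: vapp bracket_def fun_eq_iff left_diff_distrib right_diff_distrib sum_subtractf)

lemma bracket_bv: assumes "p \<in> Bset n" "q \<in> Bset n" shows "bracket n (bv p) (bv q) = br p q"
proof (rule ext)
  fix c
  have "bracket n (bv p) (bv q) c = (\<Sum>p'\<in>Bset n. bv p p' * (\<Sum>q'\<in>Bset n. bv q q' * br p' q' c))"
    by (simp add: bracket_def sum_distrib_left mult.assoc)
  also have "\<dots> = (\<Sum>p'\<in>Bset n. bv p p' * br p' q c)"
    using assms by (simp add: sum_bv_delta2)
  also have "\<dots> = br p q c"
    using assms by (simp add: sum_bv_delta2)
  finally show "bracket n (bv p) (bv q) c = br p q c" .
qed

lemma br_vals:
  "br (Ee i) X = bv (Xi i)" "br (Ee i) U = bv (Ui i)" "br (Ee i) Y = bv (Yi i)"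
  "i < j \<Longrightarrow> br (Ee i) (Ee j) = bv (EW i j)"
  "br A Bb = bv C" "br A Y = bv F" "br X U = bv F" "br Bb U = bv H" "br Bb Y = bv H" "br X Y = bv H"
  "br A X = vzero" "br A U = vzero" "br Bb X = vzero" "br U Y = vzero"
  "br A (Ee j) = vzero" "br Bb (Ee j) = vzero"
  by (auto simp: br_def fun_eq_iff bv_apply vzero_def)

section \<open>Derivations\<close>

lemma DerD:
  assumes "D \<in> Der n"
  shows "D \<in> endo (Vn n)"
    "v \<in> Vn n \<Longrightarrow> w \<in> Vn n \<Longrightarrow> D (bracket n v w) = vadd (bracket n (D v) w) (bracket n v (D w))"
  using assms by (auto simp: Der_def)

lemma der_vzero: "D \<in> Der n \<Longrightarrow> D vzero = vzero"
  using DerD(1) endo_vzero unfolding Vn_def by blast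

lemma der_in: "D \<in> Der n \<Longrightarrow> D v \<in> Vn n"
  using DerD(1) endo_in unfolding Vn_def by blast

lemma der_out: "D \<in> Der n \<Longrightarrow> c \<notin> Bset n \<Longrightarrow> D v c = 0"
  using der_in unfolding Vn_def supp_in_def by blast

lemma der_notin: assumes "D \<in> Der n" "p \<notin> Bset n" shows "D (bv p) = vzero"
  using endoD(4)[OF DerD(1)[OF assms(1)], of "bv p"] assms(2) by (simp add: Vn_def)

lemma der_basis:
  assumes "D \<in> Der n" "p \<in> Bset n" "q \<in> Bset n"
  shows "D (br p q) = vadd (bracket n (D (bv p)) (bv q)) (bracket n (bv p) (D (bv q)))"
  using DerD(2)[OF assms(1), of "bv p" "bv q"] assms by (simp add: Vn_def bracket_bv)

lemma der_expand: "D \<in> Der n \<Longrightarrow> v \<in> Vn n \<Longrightarrow> D v = (\<lambda>c. \<Sum>p\<in>Bset n. v p * D (bv p) c)"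
  using DerD(1) endo_expand unfolding Vn_def by (metis finite_Bset)

lemma one_idx: "n \<ge> 1 \<Longrightarrow> (1::nat) \<in> idx n" by (simp add: idx_def)

lemma der_G:
  assumes D: "D \<in> Der n" and n: "n \<ge> 1"
  shows "D (bv A) (Ee k) = 0" "D (bv Bb) (Ee k) = 0" "D (bv X) (Ee k) = 0" "D (bv U) (Ee k) = 0" "D (bv Y) (Ee k) = 0"
   and "D (bv Bb) A = 0" "D (bv Bb) X = 0" "D (bv Bb) U = 0" "D (bv Bb) Y = 0"
   and "D (bv X) A = 0" "D (bv X) Bb = 0" "D (bv X) U = 0" "D (bv X) Y = 0"
   and "D (bv U) A = 0" "D (bv U) Bb = 0" "D (bv U) X = 0" "D (bv U) Y = 0"
   and "D (bv Y) A = 0" "D (bv Y) Bb = 0" "D (bv Y) X = 0" "D (bv Y) U = 0"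
proof -
  note dz = der_vzero[OF D]
  have i1: "(1::nat) \<in> idx n" using n by (simp add: idx_def)
  have z1: "vadd (bracket n (D (bv A)) (bv X)) (bracket n (bv A) (D (bv X))) = vzero"
    using der_basis[OF D, of A X] by (simp add: br_vals dz)
  have z2: "vadd (bracket n (D (bv A)) (bv U)) (bracket n (bv A) (D (bv U))) = vzero"
    using der_basis[OF D, of A U] by (simp add: br_vals dz)
  have z3: "vadd (bracket n (D (bv Bb)) (bv X)) (bracket n (bv Bb) (D (bv X))) = vzero"
    using der_basis[OF D, of Bb X] by (simp add: br_vals dz)
  have z4: "vadd (bracket n (D (bv U)) (bv Y)) (bracket n (bv U) (D (bv Y))) = vzero"
    using der_basis[OF D, of U Y] by (simp add: br_vals dz)
  have z5: "vadd (bracket n (D (bv A)) (bv (Ee 1))) (bracket n (bv A) (D (bv (Ee 1)))) = vzero"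
    using der_basis[OF D, of A "Ee 1"] i1 by (simp add: br_vals dz)
  have z6: "vadd (bracket n (D (bv Bb)) (bv (Ee 1))) (bracket n (bv Bb) (D (bv (Ee 1)))) = vzero"
    using der_basis[OF D, of Bb "Ee 1"] i1 by (simp add: br_vals dz)
  have e1: "D (bv H) = vadd (bracket n (D (bv Bb)) (bv U)) (bracket n (bv Bb) (D (bv U)))"
    using der_basis[OF D, of Bb U] by (simp add: br_vals)
  have e2: "D (bv H) = vadd (bracket n (D (bv X)) (bv Y)) (bracket n (bv X) (D (bv Y)))"
    using der_basis[OF D, of X Y] by (simp add: br_vals)
  have e3: "D (bv H) = vadd (bracket n (D (bv Bb)) (bv Y)) (bracket n (bv Bb) (D (bv Y)))"
    using der_basis[OF D, of Bb Y] by (simp add: br_vals)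
  have f1: "D (bv F) = vadd (bracket n (D (bv X)) (bv U)) (bracket n (bv X) (D (bv U)))"
    using der_basis[OF D, of X U] by (simp add: br_vals)
  have f2: "D (bv F) = vadd (bracket n (D (bv A)) (bv Y)) (bracket n (bv A) (D (bv Y)))"
    using der_basis[OF D, of A Y] by (simp add: br_vals)
  note out = der_out[OF D]
  show g1: "D (bv A) (Ee k) = 0"
    using fun_cong[OF z1, of "Xi k"] out[of "Ee k"] by (cases "k \<in> idx n") (auto simp: vapp)
  show g2: "D (bv Bb) (Ee k) = 0"
    using fun_cong[OF z3, of "Xi k"] out[of "Ee k"] by (cases "k \<in> idx n") (auto simp: vapp)
  show g3: "D (bv U) (Ee k) = 0"
    using fun_cong[OF z4, of "Yi k"] out[of "Ee k"] by (cases "k \<in> idx n") (auto simp: vapp)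
  show g4: "D (bv Y) (Ee k) = 0"
    using fun_cong[OF z4, of "Ui k"] out[of "Ee k"] by (cases "k \<in> idx n") (auto simp: vapp)
  show g5: "D (bv X) (Ee k) = 0"
    using fun_cong[OF trans[OF f1[symmetric] f2], of "Ui k"] out[of "Ee k"] by (cases "k \<in> idx n") (auto simp: vapp)
  have aX: "D (bv A) X = 0" using fun_cong[OF z5, of "Xi 1"] i1 by (simp add: vapp)
  have aU: "D (bv A) U = 0" using fun_cong[OF z5, of "Ui 1"] i1 by (simp add: vapp)
  have aY: "D (bv A) Y = 0" using fun_cong[OF z5, of "Yi 1"] i1 by (simp add: vapp)
  show bX: "D (bv Bb) X = 0" using fun_cong[OF z6, of "Xi 1"] i1 by (simp add: vapp)
  show bU: "D (bv Bb) U = 0" using fun_cong[OF z6, of "Ui 1"] i1 by (simp add: vapp)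
  show bY: "D (bv Bb) Y = 0" using fun_cong[OF z6, of "Yi 1"] i1 by (simp add: vapp)
  show xA: "D (bv X) A = 0" using fun_cong[OF z3, of C] by (simp add: vapp)
  show xB: "D (bv X) Bb = 0" using fun_cong[OF z1, of C] by (simp add: vapp)
  show xY: "D (bv X) Y = 0" using fun_cong[OF z1, of F] aU by (simp add: vapp)
  show xU: "D (bv X) U = 0" using fun_cong[OF z3, of H] bY xY by (simp add: vapp)
  show uB: "D (bv U) Bb = 0" using fun_cong[OF z2, of C] by (simp add: vapp)
  show uY: "D (bv U) Y = 0" using fun_cong[OF z2, of F] aX by (simp add: vapp)
  show uA: "D (bv U) A = 0" using fun_cong[OF trans[OF e1[symmetric] e2], of C] by (simp add: vapp)
  show yA: "D (bv Y) A = 0" using fun_cong[OF trans[OF e3[symmetric] e2], of C] by (simp add: vapp)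
  have "D (bv Bb) X = D (bv Bb) A" using fun_cong[OF trans[OF e1[symmetric] e3], of F] by (simp add: vapp)
  then show bA: "D (bv Bb) A = 0" using bX by simp
  show yU: "D (bv Y) U = 0" using fun_cong[OF trans[OF e3[symmetric] e2], of F] bA xA by (simp add: vapp)
  show yB: "D (bv Y) Bb = 0" using fun_cong[OF trans[OF f1[symmetric] f2], of C] by (simp add: vapp)
  show yX: "D (bv Y) X = 0" using fun_cong[OF z4, of F] uA by (simp add: vapp)
  show uX: "D (bv U) X = 0" using fun_cong[OF z4, of H] uB yB by (simp add: vapp)
qed


definition isgen :: "basis \<Rightarrow> bool" where
  "isgen p = ((\<exists>i. p = Ee i) \<or> p \<in> {A, Bb, X, U, Y})"

lemma derived_br:
  assumes "p \<in> Bset n" "\<not> isgen p"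
  shows "\<exists>p1 p2. p1 \<in> Bset n \<and> p2 \<in> Bset n \<and> isgen p1 \<and> isgen p2 \<and> br p1 p2 = bv p"
proof (cases p)
  case (EW i j) then show ?thesis using assms by (intro exI[of _ "Ee i"] exI[of _ "Ee j"]) (auto simp: br_vals isgen_def)
next
  case C then show ?thesis using assms by (intro exI[of _ A] exI[of _ Bb]) (auto simp: br_vals isgen_def)
next
  case (Xi i) then show ?thesis using assms by (intro exI[of _ "Ee i"] exI[of _ X]) (auto simp: br_vals isgen_def)
next
  case (Ui i) then show ?thesis using assms by (intro exI[of _ "Ee i"] exI[of _ U]) (auto simp: br_vals isgen_def)
next
  case (Yi i) then show ?thesis using assms by (intro exI[of _ "Ee i"] exI[of _ Y]) (auto simp: br_vals isgen_def)
next
  case F then show ?thesis using assms by (intro exI[of _ A] exI[of _ Y]) (auto simp: br_vals isgen_def)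
next
  case H then show ?thesis using assms by (intro exI[of _ Bb] exI[of _ U]) (auto simp: br_vals isgen_def)
qed (use assms in \<open>auto simp: isgen_def\<close>)

lemma der_derived:
  fixes D :: "(basis \<Rightarrow> 'k::field) \<Rightarrow> basis \<Rightarrow> 'k"
  assumes D: "D \<in> Der n" and "p \<in> Bset n" "\<not> isgen p"
  shows "\<exists>p1 p2. p1 \<in> Bset n \<and> p2 \<in> Bset n \<and> isgen p1 \<and> isgen p2 \<and>
     D (bv p) = vadd (bracket n (D (bv p1)) (bv p2)) (bracket n (bv p1) (D (bv p2)))"
proof -
  obtain p1 p2 where p12: "p1 \<in> Bset n" "p2 \<in> Bset n" "isgen p1" "isgen p2" and e: "br p1 p2 = (bv p :: basis \<Rightarrow> 'k)"
    using derived_br assms(2,3) by blast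
  have "D (bv p) = vadd (bracket n (D (bv p1)) (bv p2)) (bracket n (bv p1) (D (bv p2)))"
    using der_basis[OF D p12(1,2)] by (simp only: e)
  then show ?thesis using \<open>p1 \<in> Bset n\<close> \<open>p2 \<in> Bset n\<close> \<open>isgen p1\<close> \<open>isgen p2\<close> by blast
qed

lemma der_W:
  assumes D: "D \<in> Der n" and n: "n \<ge> 1" and p: "p \<notin> Eset n"
  shows "D (bv p) (Ee i) = 0"
proof (cases "p \<in> Bset n")
  case False then show ?thesis using der_notin[OF D False] by (simp add: vapp)
next
  case True
  show ?thesis
  proof (cases "isgen p")
    case True
    then show ?thesis using p der_G[OF D n] \<open>p \<in> Bset n\<close> by (auto simp: isgen_def)
  next
    case False
    then show ?thesis using der_derived[OF D \<open>p \<in> Bset n\<close> False] by (auto simp: vapp)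
  qed
qed

lemma der_Wn:
  assumes D: "D \<in> Der n" and n: "n \<ge> 1" and v: "v \<in> Wn n"
  shows "D v \<in> Wn n"
  unfolding Wn_def
proof (rule supp_inI)
  fix c assume c: "c \<notin> Bset n - Eset n"
  show "D v c = 0"
  proof (cases "c \<in> Bset n")
    case False then show ?thesis using der_out[OF D] by blast
  next
    case True
    then obtain i where ci: "c = Ee i" using c by (auto simp: Eset_def)
    have vV: "v \<in> Vn n" using Wn_Vn[OF v] .
    have "D v c = (\<Sum>p\<in>Bset n. v p * D (bv p) c)" using der_expand[OF D vV] by simp
    also have "\<dots> = 0"
    proof (rule sum.neutral, rule ballI)
      fix p assume "p \<in> Bset n"
      show "v p * D (bv p) c = 0"
      proof (cases "p \<in> Eset n")
        case True then have "v p = 0" using v by (auto simp: Wn_def supp_in_def)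
        then show ?thesis by simp
      next
        case False then show ?thesis using der_W[OF D n False] ci by simp
      qed
    qed
    finally show ?thesis .
  qed
qed

lemma Der1_E:
  assumes D: "D \<in> Der1 n" and n: "n \<ge> 1"
  shows "D (bv p) (Ee i) = 0"
proof (cases "p \<in> Eset n")
  case True
  then have "bv p \<in> En n" by (simp add: En_def)
  then have "D (bv p) \<in> Wn n" using D by (auto simp: Der1_def)
  then show ?thesis by (auto simp: Wn_def supp_in_def)
next
  case False
  then show ?thesis using der_W[OF _ n False] D by (auto simp: Der1_def)
qed

lemma endo_mzero: "mzero \<in> endo (supp_in BS)"
  unfolding endo_def mzero_def by (auto simp: fun_eq_iff vapp)

lemma endo_madd:
  assumes S: "S \<in> endo (supp_in BS)" and T: "T \<in> endo (supp_in BS)"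
  shows "madd S T \<in> endo (supp_in BS)"
  using endoD[OF S] endoD[OF T] by (auto simp: endo_def madd_def fun_eq_iff vapp algebra_simps)

lemma endo_msmul:
  assumes T: "T \<in> endo (supp_in BS)"
  shows "msmul a T \<in> endo (supp_in BS)"
  using endoD[OF T] by (auto simp: endo_def msmul_def fun_eq_iff vapp algebra_simps)

lemma endo_comm:
  assumes S: "S \<in> endo (supp_in BS)" and T: "T \<in> endo (supp_in BS)"
  shows "comm S T \<in> endo (supp_in BS)"
proof -
  have i1: "\<And>v. S (T v) \<in> supp_in BS" "\<And>v. T (S v) \<in> supp_in BS" using endo_in S T by blast+
  have "(\<lambda>c. S (T v) c - T (S v) c) \<in> supp_in BS" for v
    using i1[of v] by (auto simp: supp_in_def)
  moreover have "v \<in> supp_in BS \<Longrightarrow> w \<in> supp_in BS \<Longrightarrow>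
      (\<lambda>c. S (T (vadd v w)) c - T (S (vadd v w)) c) = vadd (\<lambda>c. S (T v) c - T (S v) c) (\<lambda>c. S (T w) c - T (S w) c)" for v w
    by (simp add: endoD(2)[OF S] endoD(2)[OF T] endo_in[OF S] endo_in[OF T] fun_eq_iff vapp)
  moreover have "v \<in> supp_in BS \<Longrightarrow>
      (\<lambda>c. S (T (vsmul a v)) c - T (S (vsmul a v)) c) = vsmul a (\<lambda>c. S (T v) c - T (S v) c)" for v a
    by (simp add: endoD(3)[OF S] endoD(3)[OF T] endo_in[OF S] endo_in[OF T] fun_eq_iff vapp algebra_simps)
  moreover have "v \<notin> supp_in BS \<Longrightarrow> (\<lambda>c. S (T v) c - T (S v) c) = vzero" for v
    by (simp add: endoD(4)[OF S] endoD(4)[OF T] endo_vzero[OF S] endo_vzero[OF T] fun_eq_iff vapp)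
  ultimately show ?thesis by (simp add: endo_def comm_def)
qed

lemma Der_mzero: "mzero \<in> Der n"
  unfolding Der_def using endo_mzero[of "Bset n"] by (simp add: Vn_def mzero_def fun_eq_iff vapp)

lemma Der_madd: assumes S: "S \<in> Der n" and T: "T \<in> Der n" shows "madd S T \<in> Der n"
proof -
  have "madd S T \<in> endo (Vn n)" using endo_madd DerD(1)[OF S] DerD(1)[OF T] unfolding Vn_def by blast
  moreover have "madd S T (bracket n v w) = vadd (bracket n (madd S T v) w) (bracket n v (madd S T w))"
    if "v \<in> Vn n" "w \<in> Vn n" for v w
    using DerD(2)[OF S that] DerD(2)[OF T that]
    by (simp add: madd_def bracket_vadd1 bracket_vadd2 fun_eq_iff vapp algebra_simps)
  ultimately show ?thesis by (simp add: Der_def)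
qed

lemma Der_msmul: assumes T: "T \<in> Der n" shows "msmul a T \<in> Der n"
proof -
  have "msmul a T \<in> endo (Vn n)" using endo_msmul DerD(1)[OF T] unfolding Vn_def by blast
  moreover have "msmul a T (bracket n v w) = vadd (bracket n (msmul a T v) w) (bracket n v (msmul a T w))"
    if "v \<in> Vn n" "w \<in> Vn n" for v w
    using DerD(2)[OF T that]
    by (simp add: msmul_def bracket_vsmul1 bracket_vsmul2 fun_eq_iff vapp algebra_simps)
  ultimately show ?thesis by (simp add: Der_def)
qed

lemma Der_comm: assumes S: "S \<in> Der n" and T: "T \<in> Der n" shows "comm S T \<in> Der n"
proof -
  have eS: "S \<in> endo (Vn n)" and eT: "T \<in> endo (Vn n)" using DerD(1) S T by blast+
  have "comm S T \<in> endo (Vn n)" using endo_comm eS eT unfolding Vn_def by blast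
  moreover have "comm S T (bracket n v w) = vadd (bracket n (comm S T v) w) (bracket n v (comm S T w))"
    if v: "v \<in> Vn n" and w: "w \<in> Vn n" for v w
  proof -
    have Tv: "T v \<in> Vn n" and Tw: "T w \<in> Vn n" and Sv: "S v \<in> Vn n" and Sw: "S w \<in> Vn n"
      using der_in S T by blast+
    have a: "S (T (bracket n v w)) = vadd (vadd (bracket n (S (T v)) w) (bracket n (T v) (S w)))
                 (vadd (bracket n (S v) (T w)) (bracket n v (S (T w))))"
      by (simp add: DerD(2)[OF T v w] endoD(2)[OF eS] DerD(2)[OF S] Tv Tw v w)
    have b: "T (S (bracket n v w)) = vadd (vadd (bracket n (T (S v)) w) (bracket n (S v) (T w)))
                 (vadd (bracket n (T v) (S w)) (bracket n v (T (S w))))"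
      by (simp add: DerD(2)[OF S v w] endoD(2)[OF eT] DerD(2)[OF T] Sv Sw v w)
    show ?thesis unfolding comm_def using a b
      by (simp add: fun_eq_iff bracket_diff1 bracket_diff2 vapp algebra_simps)
  qed
  ultimately show ?thesis by (simp add: Der_def)
qed

lemma der_vanish:
  assumes D: "D \<in> Der n" and g: "\<And>p. isgen p \<Longrightarrow> D (bv p) = vzero"
  shows "D = mzero"
proof -
  have all: "D (bv p) = vzero" for p
  proof (cases "p \<in> Bset n")
    case False then show ?thesis using der_notin[OF D] by blast
  next
    case True
    show ?thesis
    proof (cases "isgen p")
      case True then show ?thesis using g by blast
    next
      case False
      then obtain p1 p2 where "isgen p1" "isgen p2"
        "D (bv p) = vadd (bracket n (D (bv p1)) (bv p2)) (bracket n (bv p1) (D (bv p2)))"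
        using der_derived[OF D \<open>p \<in> Bset n\<close>] by blast
      then show ?thesis using g by (simp add: fun_eq_iff vapp)
    qed
  qed
  show ?thesis
  proof (rule ext)
    fix v
    show "D v = mzero v"
    proof (cases "v \<in> Vn n")
      case True
      then show ?thesis using der_expand[OF D True] all by (simp add: mzero_def vzero_def)
    next
      case False
      then show ?thesis using endoD(4)[OF DerD(1)[OF D]] by (simp add: mzero_def)
    qed
  qed
qed


section \<open>Construction of derivations from gl(E)\<close>

definition ew :: "(basis \<Rightarrow> 'k::field) \<Rightarrow> nat \<Rightarrow> nat \<Rightarrow> 'k" where
  "ew v k l = (if k < l then v (EW k l) else if l < k then - v (EW l k) else 0)"

definition alpha :: "((basis \<Rightarrow> 'k::field) \<Rightarrow> basis \<Rightarrow> 'k) \<Rightarrow> nat \<Rightarrow> nat \<Rightarrow> 'k" where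
  "alpha T i k = T (bv (Ee k)) (Ee i)"

definition PhiC :: "nat \<Rightarrow> ((basis \<Rightarrow> 'k::field) \<Rightarrow> basis \<Rightarrow> 'k) \<Rightarrow> (basis \<Rightarrow> 'k) \<Rightarrow> basis \<Rightarrow> 'k" where
  "PhiC n T v c = (case c of
     Ee i \<Rightarrow> if i \<in> idx n then (\<Sum>k\<in>idx n. alpha T i k * v (Ee k)) else 0
   | EW i j \<Rightarrow> if i \<in> idx n \<and> j \<in> idx n \<and> i < j then (\<Sum>k\<in>idx n. alpha T i k * ew v k j + alpha T j k * ew v i k) else 0
   | Xi i \<Rightarrow> if i \<in> idx n then (\<Sum>k\<in>idx n. alpha T i k * v (Xi k)) else 0
   | Ui i \<Rightarrow> if i \<in> idx n then (\<Sum>k\<in>idx n. alpha T i k * v (Ui k)) else 0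
   | Yi i \<Rightarrow> if i \<in> idx n then (\<Sum>k\<in>idx n. alpha T i k * v (Yi k)) else 0
   | _ \<Rightarrow> 0)"

lemma PhiC_simps[simp]:
  "PhiC n T v (Ee i) = (if i \<in> idx n then (\<Sum>k\<in>idx n. alpha T i k * v (Ee k)) else 0)"
  "PhiC n T v (EW i j) = (if i \<in> idx n \<and> j \<in> idx n \<and> i < j then (\<Sum>k\<in>idx n. alpha T i k * ew v k j + alpha T j k * ew v i k) else 0)"
  "PhiC n T v (Xi i) = (if i \<in> idx n then (\<Sum>k\<in>idx n. alpha T i k * v (Xi k)) else 0)"
  "PhiC n T v (Ui i) = (if i \<in> idx n then (\<Sum>k\<in>idx n. alpha T i k * v (Ui k)) else 0)"
  "PhiC n T v (Yi i) = (if i \<in> idx n then (\<Sum>k\<in>idx n. alpha T i k * v (Yi k)) else 0)"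
  "PhiC n T v A = 0" "PhiC n T v Bb = 0" "PhiC n T v X = 0" "PhiC n T v U = 0" "PhiC n T v Y = 0"
  "PhiC n T v C = 0" "PhiC n T v F = 0" "PhiC n T v H = 0"
  by (simp_all add: PhiC_def)

definition Phi :: "nat \<Rightarrow> ((basis \<Rightarrow> 'k::field) \<Rightarrow> basis \<Rightarrow> 'k) \<Rightarrow> (basis \<Rightarrow> 'k) \<Rightarrow> basis \<Rightarrow> 'k" where
  "Phi n T v = (if v \<in> Vn n then PhiC n T v else vzero)"

lemma PhiC_in: "PhiC n T v \<in> Vn n"
  unfolding Vn_def by (rule supp_inI) (case_tac c; auto)

lemma ew_vadd: "ew (vadd v w) k l = ew v k l + ew w k l" by (simp add: ew_def vapp)
lemma ew_vsmul: "ew (vsmul a v) k l = a * ew v k l" by (simp add: ew_def vapp)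

lemma PhiC_vadd: "PhiC n T (vadd v w) = vadd (PhiC n T v) (PhiC n T w)"
  by (rule ext, case_tac x) (simp_all add: vapp ew_vadd sum.distrib algebra_simps)

lemma PhiC_vsmul: "PhiC n T (vsmul a v) = vsmul a (PhiC n T v)"
  by (rule ext, case_tac x) (simp_all add: vapp ew_vsmul sum_distrib_left algebra_simps)

lemma Phi_endo: "Phi n T \<in> endo (Vn n)"
  unfolding endo_def Phi_def using PhiC_in
  by (auto simp: PhiC_vadd PhiC_vsmul Vn_def)

lemma ew_bracket: "k \<in> idx n \<Longrightarrow> l \<in> idx n \<Longrightarrow>
   ew (bracket n v w) k l = v (Ee k) * w (Ee l) - v (Ee l) * w (Ee k)"
  by (auto simp: ew_def)

lemma PhiC_der: "PhiC n T (bracket n v w) = vadd (bracket n (PhiC n T v) w) (bracket n v (PhiC n T w))"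
proof (rule ext)
  fix c
  show "PhiC n T (bracket n v w) c = vadd (bracket n (PhiC n T v) w) (bracket n v (PhiC n T w)) c"
  proof (cases c)
    case (Xi i)
    have "(\<Sum>k\<in>idx n. alpha T i k * bracket n v w (Xi k)) = (\<Sum>k\<in>idx n. alpha T i k * (v (Ee k) * w X - v X * w (Ee k)))"
      by (rule sum.cong) auto
    also have "\<dots> = (\<Sum>k\<in>idx n. alpha T i k * v (Ee k)) * w X - v X * (\<Sum>k\<in>idx n. alpha T i k * w (Ee k))"
      by (simp add: algebra_simps sum_distrib_left sum_distrib_right sum_subtractf)
    finally show ?thesis using Xi by (simp add: vapp)
  next
    case (Ui i)
    have "(\<Sum>k\<in>idx n. alpha T i k * bracket n v w (Ui k)) = (\<Sum>k\<in>idx n. alpha T i k * (v (Ee k) * w U - v U * w (Ee k)))"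
      by (rule sum.cong) auto
    also have "\<dots> = (\<Sum>k\<in>idx n. alpha T i k * v (Ee k)) * w U - v U * (\<Sum>k\<in>idx n. alpha T i k * w (Ee k))"
      by (simp add: algebra_simps sum_distrib_left sum_distrib_right sum_subtractf)
    finally show ?thesis using Ui by (simp add: vapp)
  next
    case (Yi i)
    have "(\<Sum>k\<in>idx n. alpha T i k * bracket n v w (Yi k)) = (\<Sum>k\<in>idx n. alpha T i k * (v (Ee k) * w Y - v Y * w (Ee k)))"
      by (rule sum.cong) auto
    also have "\<dots> = (\<Sum>k\<in>idx n. alpha T i k * v (Ee k)) * w Y - v Y * (\<Sum>k\<in>idx n. alpha T i k * w (Ee k))"
      by (simp add: algebra_simps sum_distrib_left sum_distrib_right sum_subtractf)
    finally show ?thesis using Yi by (simp add: vapp)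
  next
    case (EW i j)
    show ?thesis
    proof (cases "i \<in> idx n \<and> j \<in> idx n \<and> i < j")
      case True
      have "(\<Sum>k\<in>idx n. alpha T i k * ew (bracket n v w) k j + alpha T j k * ew (bracket n v w) i k)
         = (\<Sum>k\<in>idx n. alpha T i k * (v (Ee k) * w (Ee j) - v (Ee j) * w (Ee k))
                   + alpha T j k * (v (Ee i) * w (Ee k) - v (Ee k) * w (Ee i)))"
        using True by (intro sum.cong) (auto simp: ew_bracket)
      also have "\<dots> = (\<Sum>k\<in>idx n. alpha T i k * v (Ee k)) * w (Ee j) - (\<Sum>k\<in>idx n. alpha T j k * v (Ee k)) * w (Ee i)
          + (v (Ee i) * (\<Sum>k\<in>idx n. alpha T j k * w (Ee k)) - v (Ee j) * (\<Sum>k\<in>idx n. alpha T i k * w (Ee k)))"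
        by (simp add: algebra_simps sum_distrib_left sum_distrib_right sum_subtractf sum.distrib)
      finally have M: "(\<Sum>k\<in>idx n. alpha T i k * ew (bracket n v w) k j + alpha T j k * ew (bracket n v w) i k) =
          (\<Sum>k\<in>idx n. alpha T i k * v (Ee k)) * w (Ee j) - (\<Sum>k\<in>idx n. alpha T j k * v (Ee k)) * w (Ee i)
          + (v (Ee i) * (\<Sum>k\<in>idx n. alpha T j k * w (Ee k)) - v (Ee j) * (\<Sum>k\<in>idx n. alpha T i k * w (Ee k)))" .
      have L: "PhiC n T (bracket n v w) (EW i j) = (\<Sum>k\<in>idx n. alpha T i k * ew (bracket n v w) k j + alpha T j k * ew (bracket n v w) i k)"
        using True by simp
      have R: "vadd (bracket n (PhiC n T v) w) (bracket n v (PhiC n T w)) (EW i j) =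
          (\<Sum>k\<in>idx n. alpha T i k * v (Ee k)) * w (Ee j) - (\<Sum>k\<in>idx n. alpha T j k * v (Ee k)) * w (Ee i)
          + (v (Ee i) * (\<Sum>k\<in>idx n. alpha T j k * w (Ee k)) - v (Ee j) * (\<Sum>k\<in>idx n. alpha T i k * w (Ee k)))"
        using True by (simp add: vapp)
      show ?thesis unfolding EW L R M ..
    next
      case False then show ?thesis unfolding EW vadd_apply PhiC_simps bracket_EW if_not_P[OF False] by simp
    qed
  next
    case (Ee i) then show ?thesis by (simp add: vapp)
  next
    case A then show ?thesis by (simp add: vapp)
  next
    case Bb then show ?thesis by (simp add: vapp)
  next
    case X then show ?thesis by (simp add: vapp)
  next
    case U then show ?thesis by (simp add: vapp)
  next
    case Y then show ?thesis by (simp add: vapp)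
  next
    case C then show ?thesis by (simp add: vapp)
  next
    case F then show ?thesis by (simp add: vapp)
  next
    case H then show ?thesis by (simp add: vapp)
  qed
qed

lemma Phi_Der: "Phi n T \<in> Der n"
proof -
  have "Phi n T (bracket n v w) = vadd (bracket n (Phi n T v) w) (bracket n v (Phi n T w))"
    if "v \<in> Vn n" "w \<in> Vn n" for v w
    using that by (simp add: Phi_def PhiC_der)
  then show ?thesis using Phi_endo by (simp add: Der_def)
qed

lemma En_zero: "v \<in> En n \<Longrightarrow> c \<notin> Eset n \<Longrightarrow> v c = 0"
  by (simp add: En_def supp_in_def)

lemma ew_En: "v \<in> En n \<Longrightarrow> ew v k l = 0"
  by (simp add: ew_def En_zero)

lemma ew_bv: "(\<And>a b. p \<noteq> EW a b) \<Longrightarrow> ew (bv p) k l = 0"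
  unfolding ew_def bv_def by auto

lemma PhiC_En: assumes v: "v \<in> En n" shows "PhiC n T v \<in> En n"
  unfolding En_def
proof (rule supp_inI)
  fix c assume "c \<notin> Eset n"
  then show "PhiC n T v c = 0"
    by (cases c) (simp_all add: ew_En[OF v] En_zero[OF v])
qed

lemma Phi_Der0: "Phi n T \<in> Der0 n"
proof -
  have gen: "Phi n T (bv p) = vzero" if "p \<in> {A, Bb, X, U, Y}" for p
  proof -
    have "PhiC n T (bv p) = vzero" using that
      by (intro ext, case_tac x) (auto simp: vapp ew_bv)
    then show ?thesis using that by (auto simp: Phi_def Vn_def)
  qed
  have "Phi n T v \<in> En n" if "v \<in> En n" for v
    using PhiC_En[OF that] En_Vn[OF that] by (simp add: Phi_def)
  then show ?thesis using gen Phi_Der by (simp add: Der0_def)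
qed

lemma sum_Eset: "(\<Sum>p\<in>Eset n. f p) = (\<Sum>k\<in>idx n. f (Ee k))"
  unfolding Eset_def by (subst sum.reindex) (auto simp: inj_on_def)

lemma Phi_restrict:
  assumes T: "T \<in> endo (En n)" and v: "v \<in> En n"
  shows "Phi n T v = T v"
proof (rule ext)
  fix c
  have TE: "T \<in> endo (supp_in (Eset n))" using T by (simp add: En_def)
  have vE: "v \<in> supp_in (Eset n)" using v by (simp add: En_def)
  have Tv: "T v \<in> En n" using endoD(1)[OF T v] .
  have P: "Phi n T v = PhiC n T v" using En_Vn[OF v] by (simp add: Phi_def)
  show "Phi n T v c = T v c"
  proof (cases "c \<in> Eset n")
    case True
    then obtain i where ci: "c = Ee i" "i \<in> idx n" by (auto simp: Eset_def)
    have "T v c = (\<Sum>p\<in>Eset n. v p * T (bv p) c)" using endo_expand[OF TE _ vE] by simp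
    also have "\<dots> = (\<Sum>k\<in>idx n. v (Ee k) * T (bv (Ee k)) c)" by (rule sum_Eset)
    finally show ?thesis using ci P by (simp add: alpha_def mult.commute)
  next
    case False
    then show ?thesis using En_zero[OF Tv False] En_zero[OF PhiC_En[OF v] False] P by simp
  qed
qed


lemma En_vzero[simp]: "vzero \<in> En n" by (simp add: En_def)
lemma En_vadd[simp]: "v \<in> En n \<Longrightarrow> w \<in> En n \<Longrightarrow> vadd v w \<in> En n" by (simp add: En_def)
lemma En_vsmul[simp]: "v \<in> En n \<Longrightarrow> vsmul a v \<in> En n" by (simp add: En_def)
lemma Wn_vzero[simp]: "vzero \<in> Wn n" by (simp add: Wn_def)
lemma Wn_vadd[simp]: "v \<in> Wn n \<Longrightarrow> w \<in> Wn n \<Longrightarrow> vadd v w \<in> Wn n" by (simp add: Wn_def)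
lemma Wn_vsmul[simp]: "v \<in> Wn n \<Longrightarrow> vsmul a v \<in> Wn n" by (simp add: Wn_def)

lemma vadd_vzero: "vadd vzero vzero = vzero" by (simp add: fun_eq_iff vapp)
lemma vsmul_vzero: "vsmul a vzero = vzero" by (simp add: fun_eq_iff vapp)

lemma Der0_mzero: "mzero \<in> Der0 n"
  using Der_mzero by (simp add: Der0_def mzero_def)

lemma Der0_madd: assumes "S \<in> Der0 n" "T \<in> Der0 n" shows "madd S T \<in> Der0 n"
proof -
  have "madd S T \<in> Der n" using Der_madd assms by (auto simp: Der0_def)
  then show ?thesis using assms by (simp add: Der0_def madd_def vadd_vzero)
qed

lemma Der0_msmul: assumes "T \<in> Der0 n" shows "msmul a T \<in> Der0 n"
proof -
  have "msmul a T \<in> Der n" using Der_msmul assms by (auto simp: Der0_def)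
  then show ?thesis using assms by (simp add: Der0_def msmul_def vsmul_vzero)
qed

lemma Der0_comm: assumes S: "S \<in> Der0 n" and T: "T \<in> Der0 n" shows "comm S T \<in> Der0 n"
proof -
  have SD: "S \<in> Der n" and TD: "T \<in> Der n" using S T by (auto simp: Der0_def)
  have "comm S T v \<in> En n" if v: "v \<in> En n" for v
  proof -
    have "S (T v) \<in> En n" "T (S v) \<in> En n" using S T v by (auto simp: Der0_def)
    then show ?thesis by (auto simp: comm_def En_def supp_in_def)
  qed
  moreover have "comm S T (bv p) = vzero" if "p \<in> {A, Bb, X, U, Y}" for p
  proof -
    have "T (bv p) = vzero" "S (bv p) = vzero" using S T that by (auto simp: Der0_def)
    then have "comm S T (bv p) = (\<lambda>c. S vzero c - T vzero c)" by (simp add: comm_def)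
    then show ?thesis by (simp add: der_vzero[OF SD] der_vzero[OF TD] fun_eq_iff vapp)
  qed
  ultimately show ?thesis using Der_comm[OF SD TD] by (simp add: Der0_def)
qed

lemma Der1_mzero: "mzero \<in> Der1 n"
  using Der_mzero by (simp add: Der1_def mzero_def)

lemma Der1_madd: assumes "S \<in> Der1 n" "T \<in> Der1 n" shows "madd S T \<in> Der1 n"
proof -
  have "madd S T \<in> Der n" using Der_madd assms by (auto simp: Der1_def)
  then show ?thesis using assms by (simp add: Der1_def madd_def)
qed

lemma Der1_msmul: assumes "T \<in> Der1 n" shows "msmul a T \<in> Der1 n"
proof -
  have "msmul a T \<in> Der n" using Der_msmul assms by (auto simp: Der1_def)
  then show ?thesis using assms by (simp add: Der1_def msmul_def)
qed

lemma Der1_ideal: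
  assumes S: "S \<in> Der n" and T: "T \<in> Der1 n" and n: "n \<ge> 1"
  shows "comm S T \<in> Der1 n"
proof -
  have TD: "T \<in> Der n" using T by (simp add: Der1_def)
  have "comm S T v \<in> Wn n" if v: "v \<in> En n" for v
    unfolding Wn_def
  proof (rule supp_inI)
    fix c assume c: "c \<notin> Bset n - Eset n"
    show "comm S T v c = 0"
    proof (cases "c \<in> Bset n")
      case False then show ?thesis using der_out[OF S False] der_out[OF TD False] by (simp add: comm_def)
    next
      case True
      then obtain i where ci: "c = Ee i" using c by (auto simp: Eset_def)
      have "T v \<in> Wn n" using T v by (simp add: Der1_def)
      then have "S (T v) \<in> Wn n" using der_Wn[OF S n] by blast
      then have 1: "S (T v) c = 0" using ci by (simp add: Wn_def supp_in_def)
      have "T (S v) c = (\<Sum>p\<in>Bset n. S v p * T (bv p) c)"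
        using der_expand[OF TD der_in[OF S]] by simp
      also have "\<dots> = 0" using Der1_E[OF T n] ci by simp
      finally show ?thesis using 1 by (simp add: comm_def)
    qed
  qed
  then show ?thesis using Der_comm[OF S TD] by (simp add: Der1_def)
qed

lemma Der0_eq:
  assumes S: "S \<in> Der0 n" and T: "T \<in> Der0 n"
    and e: "\<And>i. i \<in> idx n \<Longrightarrow> S (bv (Ee i)) = T (bv (Ee i))"
  shows "S = T"
proof -
  have SD: "S \<in> Der n" and TD: "T \<in> Der n" using S T by (auto simp: Der0_def)
  let ?Z = "madd S (msmul (-1) T)"
  have ZD: "?Z \<in> Der n" using Der_madd[OF SD Der_msmul[OF TD]] .
  have "?Z = mzero"
  proof (rule der_vanish[OF ZD])
    fix p assume "isgen p"
    then consider i where "p = Ee i" | "p \<in> {A, Bb, X, U, Y}" by (auto simp: isgen_def)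
    then show "?Z (bv p) = vzero"
    proof cases
      case 1
      show ?thesis
      proof (cases "i \<in> idx n")
        case True then show ?thesis using e[OF True] 1 by (simp add: madd_def msmul_def fun_eq_iff vapp)
      next
        case False then show ?thesis using der_notin[OF ZD, of p] 1 by simp
      qed
    next
      case 2 then show ?thesis using S T by (auto simp: Der0_def madd_def msmul_def fun_eq_iff vapp)
    qed
  qed
  have "S v c = T v c" for v c
  proof -
    have z: "?Z v c = 0" using \<open>?Z = mzero\<close> by (simp add: mzero_def vapp)
    have "S v c + -1 * T v c = 0" using z by (simp only: madd_def msmul_def vadd_apply vsmul_apply)
    then show ?thesis by simp
  qed
  then show ?thesis by (intro ext)
qed

section \<open>The isomorphism with gl(E)\<close>

definition res :: "nat \<Rightarrow> ((basis \<Rightarrow> 'k::field) \<Rightarrow> basis \<Rightarrow> 'k) \<Rightarrow> (basis \<Rightarrow> 'k) \<Rightarrow> basis \<Rightarrow> 'k" where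
  "res n D = (\<lambda>v. if v \<in> En n then D v else vzero)"

lemma res_endo:
  fixes D :: "(basis \<Rightarrow> 'k::field) \<Rightarrow> basis \<Rightarrow> 'k"
  assumes D: "D \<in> Der0 n" shows "res n D \<in> glE n"
proof -
  have DD: "D \<in> Der n" using D by (simp add: Der0_def)
  have e: "D \<in> endo (Vn n)" using DerD(1)[OF DD] .
  have m: "D v \<in> En n" if "v \<in> En n" for v using D that by (simp add: Der0_def)
  show ?thesis unfolding glE_def endo_def res_def
  proof (intro CollectI conjI ballI allI impI)
    fix v w :: "basis \<Rightarrow> 'k" assume "v \<in> En n" "w \<in> En n"
    then show "(if vadd v w \<in> En n then D (vadd v w) else vzero) =
       vadd (if v \<in> En n then D v else vzero) (if w \<in> En n then D w else vzero)"
      using endoD(2)[OF e En_Vn En_Vn] by simp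
  next
    fix a and v :: "basis \<Rightarrow> 'k" assume "v \<in> En n"
    then show "(if vsmul a v \<in> En n then D (vsmul a v) else vzero) = vsmul a (if v \<in> En n then D v else vzero)"
      using endoD(3)[OF e En_Vn] by simp
  qed (use m in auto)
qed

lemma res_Phi: assumes T: "T \<in> glE n" shows "res n (Phi n T) = T"
proof (rule ext)
  fix v
  show "res n (Phi n T) v = T v"
    using Phi_restrict[of T n v] T endoD(4)[of T "En n" v] by (auto simp: res_def glE_def)
qed

lemma iso: assumes n: "n \<ge> 1" shows "lie_iso (res n) (Der0 n) (glE n)"
proof -
  have inj: "inj_on (res n) (Der0 n)"
  proof (rule inj_onI)
    fix S T assume S: "S \<in> Der0 n" and T: "T \<in> Der0 n" and e: "res n S = res n T"
    show "S = T"
    proof (rule Der0_eq[OF S T])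
      fix i assume "i \<in> idx n"
      then have b: "bv (Ee i) \<in> En n" by (simp add: En_def)
      have "res n S (bv (Ee i)) = S (bv (Ee i))" "res n T (bv (Ee i)) = T (bv (Ee i))" unfolding res_def if_P[OF b] by simp_all
      then show "S (bv (Ee i)) = T (bv (Ee i))" using e by metis
    qed
  qed
  have img: "res n ` Der0 n = glE n"
  proof
    show "res n ` Der0 n \<subseteq> glE n" using res_endo by blast
    show "glE n \<subseteq> res n ` Der0 n"
    proof
      fix T assume "T \<in> glE n"
      then show "T \<in> res n ` Der0 n" using res_Phi Phi_Der0 by (metis image_eqI)
    qed
  qed
  have add: "res n (madd S T) = madd (res n S) (res n T)" for S T :: "(basis \<Rightarrow> 'a) \<Rightarrow> basis \<Rightarrow> 'a"
    by (simp add: res_def madd_def fun_eq_iff vapp)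
  have smul: "res n (msmul a T) = msmul a (res n T)" for a T
    by (simp add: res_def msmul_def fun_eq_iff vapp)
  have cm: "res n (comm S T) = comm (res n S) (res n T)" if S: "S \<in> Der0 n" and T: "T \<in> Der0 n" for S T
  proof (rule ext)
    fix v
    have SD: "S \<in> Der n" and TD: "T \<in> Der n" using S T by (auto simp: Der0_def)
    show "res n (comm S T) v = comm (res n S) (res n T) v"
    proof (cases "v \<in> En n")
      case True
      then have "T v \<in> En n" "S v \<in> En n" using S T by (auto simp: Der0_def)
      then show ?thesis using True by (simp add: res_def comm_def)
    next
      case False
      then show ?thesis using der_vzero[OF SD] der_vzero[OF TD] by (simp add: res_def comm_def fun_eq_iff vapp)
    qed
  qed
  show ?thesis unfolding lie_iso_def bij_betw_def using inj img add smul cm by blast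
qed


section \<open>Decomposition\<close>

lemma decomp_exists:
  fixes D :: "(basis \<Rightarrow> 'k::field) \<Rightarrow> basis \<Rightarrow> 'k"
  assumes D: "D \<in> Der n"
  shows "\<exists>a b. a \<in> Der0 n \<and> b \<in> Der1 n \<and> D = madd a b"
proof -
  define P where "P = (\<lambda>v. if v \<in> En n then (\<lambda>c. if c \<in> Eset n then D v c else 0) else vzero)"
  have eD: "D \<in> endo (Vn n)" using DerD(1)[OF D] .
  have PE: "P \<in> endo (En n)"
    unfolding endo_def
  proof (intro CollectI conjI ballI allI impI)
    fix v :: "basis \<Rightarrow> 'k" assume "v \<in> En n"
    then show "P v \<in> En n" by (simp add: P_def En_def supp_in_def)
  next
    fix v w :: "basis \<Rightarrow> 'k" assume v: "v \<in> En n" and w: "w \<in> En n"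
    then show "P (vadd v w) = vadd (P v) (P w)"
      using endoD(2)[OF eD En_Vn[OF v] En_Vn[OF w]] by (simp add: P_def fun_eq_iff vapp)
  next
    fix a and v :: "basis \<Rightarrow> 'k" assume v: "v \<in> En n"
    then show "P (vsmul a v) = vsmul a (P v)"
      using endoD(3)[OF eD En_Vn[OF v]] by (simp add: P_def fun_eq_iff vapp)
  next
    fix v :: "basis \<Rightarrow> 'k" assume "v \<notin> En n"
    then show "P v = vzero" by (simp add: P_def)
  qed
  let ?a = "Phi n P"
  let ?b = "madd D (msmul (-1) ?a)"
  have a0: "?a \<in> Der0 n" by (rule Phi_Der0)
  have bD: "?b \<in> Der n" using Der_madd[OF D Der_msmul[OF Phi_Der]] .
  have "?b v \<in> Wn n" if v: "v \<in> En n" for v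
    unfolding Wn_def
  proof (rule supp_inI)
    fix c assume c: "c \<notin> Bset n - Eset n"
    have "?b v c = D v c - P v c"
      using Phi_restrict[OF PE v] by (simp add: madd_def msmul_def vapp)
    also have "\<dots> = 0"
    proof (cases "c \<in> Eset n")
      case True then show ?thesis using v by (simp add: P_def)
    next
      case False
      then have "c \<notin> Bset n" using c by blast
      then show ?thesis using der_out[OF D] False v by (simp add: P_def)
    qed
    finally show "?b v c = 0" .
  qed
  then have b1: "?b \<in> Der1 n" using bD by (simp add: Der1_def)
  have "D = madd ?a ?b" by (simp add: madd_def msmul_def fun_eq_iff vapp)
  then show ?thesis using a0 b1 by blast
qed

lemma decomp_unique:
  assumes a: "a \<in> Der0 n" and a': "a' \<in> Der0 n" and b: "b \<in> Der1 n" and b': "b' \<in> Der1 n"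
    and e: "madd a b = madd a' b'" and n: "n \<ge> 1"
  shows "a = a' \<and> b = b'"
proof -
  have pt: "a v c + b v c = a' v c + b' v c" for v c
    using fun_cong[OF fun_cong[OF e, of v], of c] by (simp only: madd_def vadd_apply)
  have "a = a'"
  proof (rule Der0_eq[OF a a'])
    fix i assume i: "i \<in> idx n"
    then have bE: "bv (Ee i) \<in> En n" by (simp add: En_def)
    show "a (bv (Ee i)) = a' (bv (Ee i))"
    proof (rule ext)
      fix c
      show "a (bv (Ee i)) c = a' (bv (Ee i)) c"
      proof (cases "c \<in> Eset n")
        case True
        then obtain k where "c = Ee k" by (auto simp: Eset_def)
        then show ?thesis using pt[of "bv (Ee i)" c] Der1_E[OF b n] Der1_E[OF b' n] by simp
      next
        case False
        have "a (bv (Ee i)) \<in> En n" "a' (bv (Ee i)) \<in> En n" using a a' bE by (auto simp: Der0_def)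
        then show ?thesis using En_zero False by metis
      qed
    qed
  qed
  moreover have "b = b'" using pt \<open>a = a'\<close> by (intro ext) simp
  ultimately show ?thesis by simp
qed

section \<open>Solvability\<close>

fun lev :: "basis \<Rightarrow> nat" where
  "lev (Ee i) = 6" | "lev A = 5" | "lev Bb = 4" | "lev X = 4" | "lev U = 4" | "lev Y = 4"
| "lev (EW i j) = 3" | "lev C = 2" | "lev (Xi i) = 2" | "lev (Ui i) = 2" | "lev (Yi i) = 2"
| "lev F = 1" | "lev H = 0"

lemma lev_le: "lev p \<le> 6" by (cases p) auto

definition Tri :: "nat \<Rightarrow> ((basis \<Rightarrow> 'k::field) \<Rightarrow> basis \<Rightarrow> 'k) set" where
  "Tri n = {T \<in> endo (Vn n). \<forall>p q. q \<noteq> p \<and> lev p \<le> lev q \<longrightarrow> T (bv p) q = 0}"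

definition Low :: "nat \<Rightarrow> nat \<Rightarrow> ((basis \<Rightarrow> 'k::field) \<Rightarrow> basis \<Rightarrow> 'k) set" where
  "Low n k = {T \<in> endo (Vn n). \<forall>p q. lev p < lev q + k \<longrightarrow> T (bv p) q = 0}"

lemma Der1_Tri:
  assumes D: "D \<in> Der1 n" and n: "n \<ge> 1"
  shows "D \<in> Tri n"
proof -
  have DD: "D \<in> Der n" using D by (simp add: Der1_def)
  note G = der_G[OF DD n]
  note E1 = Der1_E[OF D n]
  have dEW: "D (bv (EW i j)) = vadd (bracket n (D (bv (Ee i))) (bv (Ee j))) (bracket n (bv (Ee i)) (D (bv (Ee j))))"
    if "i < j" "i \<in> idx n" "j \<in> idx n" for i j
    using der_basis[OF DD, of "Ee i" "Ee j"] that by (simp add: br_vals)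
  have dC: "D (bv C) = vadd (bracket n (D (bv A)) (bv Bb)) (bracket n (bv A) (D (bv Bb)))"
    using der_basis[OF DD, of A Bb] by (simp add: br_vals)
  have dXi: "D (bv (Xi i)) = vadd (bracket n (D (bv (Ee i))) (bv X)) (bracket n (bv (Ee i)) (D (bv X)))"
    if "i \<in> idx n" for i
    using der_basis[OF DD, of "Ee i" X] that by (simp add: br_vals)
  have dUi: "D (bv (Ui i)) = vadd (bracket n (D (bv (Ee i))) (bv U)) (bracket n (bv (Ee i)) (D (bv U)))"
    if "i \<in> idx n" for i
    using der_basis[OF DD, of "Ee i" U] that by (simp add: br_vals)
  have dYi: "D (bv (Yi i)) = vadd (bracket n (D (bv (Ee i))) (bv Y)) (bracket n (bv (Ee i)) (D (bv Y)))"
    if "i \<in> idx n" for i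
    using der_basis[OF DD, of "Ee i" Y] that by (simp add: br_vals)
  have dF: "D (bv F) = vadd (bracket n (D (bv X)) (bv U)) (bracket n (bv X) (D (bv U)))"
    using der_basis[OF DD, of X U] by (simp add: br_vals)
  have dH: "D (bv H) = vadd (bracket n (D (bv X)) (bv Y)) (bracket n (bv X) (D (bv Y)))"
    using der_basis[OF DD, of X Y] by (simp add: br_vals)
  have "D (bv p) q = 0" if qp: "q \<noteq> p" and l: "lev p \<le> lev q" for p q
  proof (cases "p \<in> Bset n")
    case False then show ?thesis using der_notin[OF DD False] by (simp add: vapp)
  next
    case True
    then show ?thesis using qp l
      by (cases p; cases q) (simp_all add: dEW dC dXi dUi dYi dF dH G E1 vapp)
  qed
  then show ?thesis using DerD(1)[OF DD] by (simp add: Tri_def)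
qed

lemma tri_term:
  assumes S: "S \<in> Tri n" and T: "T \<in> Tri n" and l: "lev p \<le> lev q" and rq: "r \<noteq> p \<or> q \<noteq> p"
  shows "T (bv p) r * S (bv r) q = 0"
proof -
  have Tz: "T (bv p) r' = 0" if "r' \<noteq> p" "lev p \<le> lev r'" for r' using T that by (simp add: Tri_def)
  have Sz: "S (bv r') q' = 0" if "q' \<noteq> r'" "lev r' \<le> lev q'" for r' q' using S that by (simp add: Tri_def)
  show ?thesis
  proof (cases "r = p")
    case True then show ?thesis using rq l Sz[of q p] by simp
  next
    case False
    show ?thesis
    proof (cases "lev p \<le> lev r")
      case True then show ?thesis using Tz[OF False] by simp
    next
      case nl: False
      then have "q \<noteq> r" "lev r \<le> lev q" using l by auto
      then show ?thesis using Sz by simp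
    qed
  qed
qed

lemma tri_sum:
  assumes S: "S \<in> Tri n" and T: "T \<in> Tri n" and l: "lev p \<le> lev q"
  shows "(\<Sum>r\<in>Bset n. T (bv p) r * S (bv r) q) = (if q = p \<and> p \<in> Bset n then T (bv p) p * S (bv p) p else 0)"
proof -
  have "(\<Sum>r\<in>Bset n. T (bv p) r * S (bv r) q) = (\<Sum>r\<in>Bset n. if r = p then (if q = p then T (bv p) p * S (bv p) p else 0) else 0)"
    using tri_term[OF S T l] by (intro sum.cong) auto
  then show ?thesis by simp
qed

lemma comm_Tri:
  assumes S: "S \<in> Tri n" and T: "T \<in> Tri n"
  shows "comm S T \<in> Low n 1"
proof -
  have eS: "S \<in> endo (supp_in (Bset n))" and eT: "T \<in> endo (supp_in (Bset n))"
    using S T by (auto simp: Tri_def Vn_def)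
  have "comm S T (bv p) q = 0" if l: "lev p < lev q + 1" for p q
  proof -
    have l': "lev p \<le> lev q" using l by simp
    have "comm S T (bv p) q = S (T (bv p)) q - T (S (bv p)) q" by (simp add: comm_def)
    also have "\<dots> = (\<Sum>r\<in>Bset n. T (bv p) r * S (bv r) q) - (\<Sum>r\<in>Bset n. S (bv p) r * T (bv r) q)"
      using comp_expand[OF eS eT] comp_expand[OF eT eS] by simp
    also have "\<dots> = 0" using tri_sum[OF S T l'] tri_sum[OF T S l'] by (simp add: mult.commute)
    finally show ?thesis .
  qed
  moreover have "comm S T \<in> endo (Vn n)" using endo_comm[OF eS eT] by (simp add: Vn_def)
  ultimately show ?thesis by (simp add: Low_def)
qed

lemma comm_Low:
  assumes S: "S \<in> Low n k" and T: "T \<in> Low n k" and k: "k \<ge> 1"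
  shows "comm S T \<in> Low n (Suc k)"
proof -
  have eS: "S \<in> endo (supp_in (Bset n))" and eT: "T \<in> endo (supp_in (Bset n))"
    using S T by (auto simp: Low_def Vn_def)
  have Sz: "S (bv p) q = 0" "T (bv p) q = 0" if "lev p < lev q + k" for p q using S T that by (auto simp: Low_def)
  have trm: "A1 (bv p) r * B1 (bv r) q = 0" if "A1 \<in> Low n k" "B1 \<in> Low n k" "lev p < lev q + Suc k" for A1 B1 p q r
  proof (cases "lev p < lev r + k")
    case True then show ?thesis using that(1) by (simp add: Low_def)
  next
    case False
    then have "lev r < lev q + k" using that(3) k by simp
    then show ?thesis using that(2) by (simp add: Low_def)
  qed
  have "comm S T (bv p) q = 0" if l: "lev p < lev q + Suc k" for p q
  proof -
    have "comm S T (bv p) q = S (T (bv p)) q - T (S (bv p)) q" by (simp add: comm_def)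
    also have "\<dots> = (\<Sum>r\<in>Bset n. T (bv p) r * S (bv r) q) - (\<Sum>r\<in>Bset n. S (bv p) r * T (bv r) q)"
      using comp_expand[OF eS eT] comp_expand[OF eT eS] by simp
    also have "\<dots> = 0"
    proof -
      have "(\<Sum>r\<in>Bset n. T (bv p) r * S (bv r) q) = 0" by (rule sum.neutral) (use trm[OF T S l] in auto)
      moreover have "(\<Sum>r\<in>Bset n. S (bv p) r * T (bv r) q) = 0" by (rule sum.neutral) (use trm[OF S T l] in auto)
      ultimately show ?thesis by simp
    qed
    finally show ?thesis .
  qed
  moreover have "comm S T \<in> endo (Vn n)" using endo_comm[OF eS eT] by (simp add: Vn_def)
  ultimately show ?thesis by (simp add: Low_def)
qed

lemma Low_span:
  fixes L :: "((basis \<Rightarrow> 'k::field) \<Rightarrow> basis \<Rightarrow> 'k) set"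
  assumes "\<And>S T. S \<in> L \<Longrightarrow> T \<in> L \<Longrightarrow> comm S T \<in> Low n k"
  shows "comm_span L \<subseteq> Low n k"
proof
  fix Z assume "Z \<in> comm_span L"
  then show "Z \<in> Low n k"
  proof (induction rule: comm_span.induct)
    case cs_zero
    have "(mzero :: (basis \<Rightarrow> 'k) \<Rightarrow> basis \<Rightarrow> 'k) (bv p) q = 0" for p q :: basis by (simp add: mzero_def vapp)
    then show ?case using endo_mzero[of "Bset n"] by (simp add: Low_def Vn_def)
  next
    case (cs_comm S T) then show ?case using assms by blast
  next
    case (cs_add S T)
    have e: "madd S T \<in> endo (Vn n)" using cs_add endo_madd[of S "Bset n" T] by (simp add: Low_def Vn_def)
    have "madd S T (bv p) q = S (bv p) q + T (bv p) q" for p q by (simp add: madd_def vapp)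
    then show ?case using e cs_add by (simp add: Low_def)
  next
    case (cs_smul T a)
    have e: "msmul a T \<in> endo (Vn n)" using cs_smul endo_msmul[of T "Bset n" a] by (simp add: Low_def Vn_def)
    have "msmul a T (bv p) q = a * T (bv p) q" for p q by (simp add: msmul_def vapp)
    then show ?case using e cs_smul by (simp add: Low_def)
  qed
qed

lemma ds_Low:
  assumes n: "n \<ge> 1"
  shows "derived_series (Der1 n :: ((basis \<Rightarrow> 'k::field) \<Rightarrow> basis \<Rightarrow> 'k) set) (Suc m) \<subseteq> Low n (Suc m)"
proof (induction m)
  case 0
  have "comm_span (Der1 n) \<subseteq> Low n 1"
    by (rule Low_span) (use comm_Tri Der1_Tri[OF _ n] in blast)
  then show ?case by simp
next
  case (Suc m)
  have "comm_span (derived_series (Der1 n :: ((basis \<Rightarrow> 'k) \<Rightarrow> basis \<Rightarrow> 'k) set) (Suc m)) \<subseteq> Low n (Suc (Suc m))"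
  proof (rule Low_span)
    fix S T :: "(basis \<Rightarrow> 'k) \<Rightarrow> basis \<Rightarrow> 'k" assume "S \<in> derived_series (Der1 n) (Suc m)" "T \<in> derived_series (Der1 n) (Suc m)"
    then have s: "S \<in> Low n (Suc m)" and t: "T \<in> Low n (Suc m)" using Suc by blast+
    show "comm S T \<in> Low n (Suc (Suc m))" by (rule comm_Low[OF s t]) simp
  qed
  then show ?case by simp
qed

lemma Low7: assumes T: "T \<in> Low n 7" shows "T = mzero"
proof (rule ext)
  fix v
  have eT: "T \<in> endo (supp_in (Bset n))" using T by (simp add: Low_def Vn_def)
  have z: "T (bv p) c = 0" for p c
  proof -
    have "lev p < lev c + 7" using lev_le[of p] by simp
    then show ?thesis using T by (simp add: Low_def)
  qed
  show "T v = mzero v"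
  proof (cases "v \<in> supp_in (Bset n)")
    case True then show ?thesis using endo_expand[OF eT _ True] z by (simp add: mzero_def vzero_def)
  next
    case False then show ?thesis using endoD(4)[OF eT False] by (simp add: mzero_def)
  qed
qed

lemma Der1_solvable: assumes n: "n \<ge> 1" shows "solvable (Der1 n)"
proof -
  have "derived_series (Der1 n) (Suc 6) = {mzero}"
  proof
    show "derived_series (Der1 n) (Suc 6) \<subseteq> {mzero}" using ds_Low[OF n, of 6] Low7 by force
    show "{mzero} \<subseteq> derived_series (Der1 n) (Suc 6)"
      unfolding derived_series.simps(2) using comm_span.cs_zero by blast
  qed
  then show ?thesis unfolding solvable_def by blast
qed


theorem mainTheorem4:
  assumes "n \<ge> 1"
  shows "(lie_subalgebra (Der0 n :: ((basis \<Rightarrow> 'k::field_char_0) \<Rightarrow> basis \<Rightarrow> 'k) set) (Der n)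
          \<and> (\<exists>\<phi>. lie_iso \<phi> (Der0 n :: ((basis \<Rightarrow> 'k) \<Rightarrow> basis \<Rightarrow> 'k) set) (glE n)))
    \<and> (lie_ideal (Der1 n :: ((basis \<Rightarrow> 'k) \<Rightarrow> basis \<Rightarrow> 'k) set) (Der n)
          \<and> solvable (Der1 n :: ((basis \<Rightarrow> 'k) \<Rightarrow> basis \<Rightarrow> 'k) set))
    \<and> (\<forall>D \<in> (Der n :: ((basis \<Rightarrow> 'k) \<Rightarrow> basis \<Rightarrow> 'k) set).
          \<exists>!P. fst P \<in> Der0 n \<and> snd P \<in> Der1 n \<and> D = madd (fst P) (snd P))"
proof (intro conjI)
  show "lie_subalgebra (Der0 n :: ((basis \<Rightarrow> 'k) \<Rightarrow> basis \<Rightarrow> 'k) set) (Der n)"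
    unfolding lie_subalgebra_def subspace_of_def
  proof -
    have "(Der0 n :: ((basis \<Rightarrow> 'k) \<Rightarrow> basis \<Rightarrow> 'k) set) \<subseteq> Der n" by (auto simp: Der0_def)
    then show "(Der0 n :: ((basis \<Rightarrow> 'k) \<Rightarrow> basis \<Rightarrow> 'k) set) \<subseteq> Der n \<and>
      (mzero \<in> Der0 n \<and> (\<forall>S\<in>Der0 n. \<forall>T\<in>Der0 n. madd S T \<in> Der0 n) \<and> (\<forall>a. \<forall>T\<in>Der0 n. msmul a T \<in> Der0 n)) \<and>
      (\<forall>S\<in>Der0 n. \<forall>T\<in>Der0 n. comm S T \<in> Der0 n)"
      using Der0_mzero Der0_madd Der0_msmul Der0_comm by blast
  qed
  show "\<exists>\<phi>. lie_iso \<phi> (Der0 n :: ((basis \<Rightarrow> 'k) \<Rightarrow> basis \<Rightarrow> 'k) set) (glE n)"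
    using iso[OF assms] by blast
  show "lie_ideal (Der1 n :: ((basis \<Rightarrow> 'k) \<Rightarrow> basis \<Rightarrow> 'k) set) (Der n)"
    unfolding lie_ideal_def subspace_of_def
  proof -
    have "(Der1 n :: ((basis \<Rightarrow> 'k) \<Rightarrow> basis \<Rightarrow> 'k) set) \<subseteq> Der n" by (auto simp: Der1_def)
    then show "(Der1 n :: ((basis \<Rightarrow> 'k) \<Rightarrow> basis \<Rightarrow> 'k) set) \<subseteq> Der n \<and>
      (mzero \<in> Der1 n \<and> (\<forall>S\<in>Der1 n. \<forall>T\<in>Der1 n. madd S T \<in> Der1 n) \<and> (\<forall>a. \<forall>T\<in>Der1 n. msmul a T \<in> Der1 n)) \<and>
      (\<forall>S\<in>Der n. \<forall>T\<in>Der1 n. comm S T \<in> Der1 n)"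
      using Der1_mzero Der1_madd Der1_msmul Der1_ideal[OF _ _ assms] by blast
  qed
  show "solvable (Der1 n :: ((basis \<Rightarrow> 'k) \<Rightarrow> basis \<Rightarrow> 'k) set)"
    using Der1_solvable[OF assms] .
  show "\<forall>D \<in> (Der n :: ((basis \<Rightarrow> 'k) \<Rightarrow> basis \<Rightarrow> 'k) set).
          \<exists>!P. fst P \<in> Der0 n \<and> snd P \<in> Der1 n \<and> D = madd (fst P) (snd P)"
  proof
    fix D :: "(basis \<Rightarrow> 'k) \<Rightarrow> basis \<Rightarrow> 'k" assume D: "D \<in> Der n"
    obtain a b where ab: "a \<in> Der0 n" "b \<in> Der1 n" "D = madd a b" using decomp_exists[OF D] by blast
    show "\<exists>!P. fst P \<in> Der0 n \<and> snd P \<in> Der1 n \<and> D = madd (fst P) (snd P)"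
    proof (rule ex1I[of _ "(a, b)"])
      show "fst (a, b) \<in> Der0 n \<and> snd (a, b) \<in> Der1 n \<and> D = madd (fst (a, b)) (snd (a, b))" using ab by simp
    next
      fix P assume P: "fst P \<in> Der0 n \<and> snd P \<in> Der1 n \<and> D = madd (fst P) (snd P)"
      have "fst P = a \<and> snd P = b"
        using decomp_unique[of "fst P" n a "snd P" b] P ab assms by simp
      then show "P = (a, b)" by (simp add: prod_eq_iff)
    qed
  qed
qed

end
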